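(* Let $\varphi : X \to X$ be a morphism in $\mathscr{C}$ and let $\lambda : X \to L$ be a cokernel of $\varphi$. Then $\varphi$ has a dual core inverse if and only if $\varphi$ has a kernel $\kappa : K \to X$ such that both $\kappa\lambda : K \to L$ and $\varphi^{3}\varphi^{*}+\lambda\lambda^{*} : X \to X$ are invertible. In this case, $$\varphi_{\mathrm{core}}=\varphi^{*}(\varphi^{3}\varphi^{*}+\lambda\lambda^{*})^{-1}\varphi^{2}.$$
   Context: $\mathscr{C}$ is an additive category with an involution $*$: a map on morphisms sending $\varphi : X\to Y$ to $\varphi^* : Y \to X$ such that $(\varphi^* )^*=\varphi$, $(\varphi\psi)^*=\psi^*\varphi^*$ and $(\varphi+\phi)^*=\varphi^*+\phi^*$. Composition is written left to right: for $\varphi : X\to Y$ and $\psi : Y\to Z$, $\varphi\psi : X \to Z$ means "first $\varphi$, then $\psi$". A kernel of $\varphi : X\to Y$ is a morphism $\kappa : K\to X$ with $\kappa\varphi=0$ such that every $\alpha : M\to X$ with $\alpha\varphi=0$ factors uniquely as $\alpha=\alpha'\kappa$. A cokernel of $\varphi$ is a morphism $\lambda : Y\to L$ with $\varphi\lambda=0$ such that every $\beta : Y\to M$ with $\varphi\beta=0$ factors uniquely as $\beta=\lambda\beta'$. A morphism is invertible if it has a two-sided inverse. For $\varphi : X\to X$, a dual core inverse of $\varphi$ is a morphism $\chi : X\to X$ with $(\chi\varphi)^*=\chi\varphi$, $\chi^2\varphi=\chi$ and $\varphi^2\chi=\varphi$. It is unique when it exists and is denoted $\varphi_{\mathrm{core}}$.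 *)

theory Defs
  imports Main
begin

text \<open>A (small or large) category presented by a set of objects, a set of arrows,
  domain/codomain maps, composition written in diagrammatic order
  (Cmp f g = "first f, then g"), identities, zero morphisms, addition of
  parallel morphisms and an involution Star.\<close>

record ('o, 'm) icat =
  Obj  :: "'o set"
  Arr  :: "'m set"
  Dom  :: "'m \<Rightarrow> 'o"
  Cod  :: "'m \<Rightarrow> 'o"
  Cmp  :: "'m \<Rightarrow> 'm \<Rightarrow> 'm"
  Idm  :: "'o \<Rightarrow> 'm"
  Zero :: "'o \<Rightarrow> 'o \<Rightarrow> 'm"
  Add  :: "'m \<Rightarrow> 'm \<Rightarrow> 'm"
  Star :: "'m \<Rightarrow> 'm"

definition Hom :: "('o, 'm, 'x) icat_scheme \<Rightarrow> 'o \<Rightarrow> 'o \<Rightarrow> 'm set" where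
  "Hom C X Y = {f \<in> Arr C. Dom C f = X \<and> Cod C f = Y}"

definition is_category :: "('o, 'm, 'x) icat_scheme \<Rightarrow> bool" where
  "is_category C \<longleftrightarrow>
     (\<forall>f \<in> Arr C. Dom C f \<in> Obj C \<and> Cod C f \<in> Obj C) \<and>
     (\<forall>X \<in> Obj C. Idm C X \<in> Hom C X X) \<and>
     (\<forall>f \<in> Arr C. \<forall>g \<in> Arr C. Cod C f = Dom C g \<longrightarrow>
        Cmp C f g \<in> Hom C (Dom C f) (Cod C g)) \<and>
     (\<forall>f \<in> Arr C. \<forall>g \<in> Arr C. \<forall>h \<in> Arr C. Cod C f = Dom C g \<longrightarrow> Cod C g = Dom C h \<longrightarrow>
        Cmp C (Cmp C f g) h = Cmp C f (Cmp C g h)) \<and>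
     (\<forall>f \<in> Arr C. Cmp C (Idm C (Dom C f)) f = f \<and> Cmp C f (Idm C (Cod C f)) = f)"

definition is_preadditive :: "('o, 'm, 'x) icat_scheme \<Rightarrow> bool" where
  "is_preadditive C \<longleftrightarrow> is_category C \<and>
     (\<forall>X \<in> Obj C. \<forall>Y \<in> Obj C.
        Zero C X Y \<in> Hom C X Y \<and>
        (\<forall>f \<in> Hom C X Y. \<forall>g \<in> Hom C X Y. Add C f g \<in> Hom C X Y) \<and>
        (\<forall>f \<in> Hom C X Y. \<forall>g \<in> Hom C X Y. \<forall>h \<in> Hom C X Y.
           Add C (Add C f g) h = Add C f (Add C g h)) \<and>
        (\<forall>f \<in> Hom C X Y. \<forall>g \<in> Hom C X Y. Add C f g = Add C g f) \<and>
        (\<forall>f \<in> Hom C X Y. Add C f (Zero C X Y) = f) \<and>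
        (\<forall>f \<in> Hom C X Y. \<exists>g \<in> Hom C X Y. Add C f g = Zero C X Y)) \<and>
     (\<forall>f \<in> Arr C. \<forall>g \<in> Arr C. \<forall>h \<in> Arr C.
        Dom C f = Dom C g \<longrightarrow> Cod C f = Cod C g \<longrightarrow> Cod C f = Dom C h \<longrightarrow>
        Cmp C (Add C f g) h = Add C (Cmp C f h) (Cmp C g h)) \<and>
     (\<forall>f \<in> Arr C. \<forall>g \<in> Arr C. \<forall>h \<in> Arr C.
        Dom C f = Dom C g \<longrightarrow> Cod C f = Cod C g \<longrightarrow> Cod C h = Dom C f \<longrightarrow>
        Cmp C h (Add C f g) = Add C (Cmp C h f) (Cmp C h g))"

definition is_additive :: "('o, 'm, 'x) icat_scheme \<Rightarrow> bool" where
  "is_additive C \<longleftrightarrow> is_preadditive C \<and>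
     (\<exists>Z \<in> Obj C. \<forall>X \<in> Obj C. (\<exists>!f. f \<in> Hom C Z X) \<and> (\<exists>!f. f \<in> Hom C X Z)) \<and>
     (\<forall>X \<in> Obj C. \<forall>Y \<in> Obj C. \<exists>P \<in> Obj C. \<exists>i1 \<in> Hom C X P. \<exists>i2 \<in> Hom C Y P.
        \<exists>p1 \<in> Hom C P X. \<exists>p2 \<in> Hom C P Y.
          Cmp C i1 p1 = Idm C X \<and> Cmp C i2 p2 = Idm C Y \<and>
          Cmp C i1 p2 = Zero C X Y \<and> Cmp C i2 p1 = Zero C Y X \<and>
          Add C (Cmp C p1 i1) (Cmp C p2 i2) = Idm C P)"

definition is_additive_inv_cat :: "('o, 'm, 'x) icat_scheme \<Rightarrow> bool" where
  "is_additive_inv_cat C \<longleftrightarrow> is_additive C \<and>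
     (\<forall>f \<in> Arr C. Star C f \<in> Hom C (Cod C f) (Dom C f) \<and> Star C (Star C f) = f) \<and>
     (\<forall>f \<in> Arr C. \<forall>g \<in> Arr C. Cod C f = Dom C g \<longrightarrow>
        Star C (Cmp C f g) = Cmp C (Star C g) (Star C f)) \<and>
     (\<forall>f \<in> Arr C. \<forall>g \<in> Arr C. Dom C f = Dom C g \<longrightarrow> Cod C f = Cod C g \<longrightarrow>
        Star C (Add C f g) = Add C (Star C f) (Star C g))"

definition is_kernel :: "('o, 'm, 'x) icat_scheme \<Rightarrow> 'm \<Rightarrow> 'm \<Rightarrow> bool" where
  "is_kernel C \<kappa> \<phi> \<longleftrightarrow> \<kappa> \<in> Arr C \<and> Cod C \<kappa> = Dom C \<phi> \<and>
     Cmp C \<kappa> \<phi> = Zero C (Dom C \<kappa>) (Cod C \<phi>) \<and>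
     (\<forall>\<alpha> \<in> Arr C. Cod C \<alpha> = Dom C \<phi> \<longrightarrow> Cmp C \<alpha> \<phi> = Zero C (Dom C \<alpha>) (Cod C \<phi>) \<longrightarrow>
        (\<exists>!\<alpha>'. \<alpha>' \<in> Hom C (Dom C \<alpha>) (Dom C \<kappa>) \<and> \<alpha> = Cmp C \<alpha>' \<kappa>))"

definition is_cokernel :: "('o, 'm, 'x) icat_scheme \<Rightarrow> 'm \<Rightarrow> 'm \<Rightarrow> bool" where
  "is_cokernel C lam \<phi> \<longleftrightarrow> lam \<in> Arr C \<and> Dom C lam = Cod C \<phi> \<and>
     Cmp C \<phi> lam = Zero C (Dom C \<phi>) (Cod C lam) \<and>
     (\<forall>\<beta> \<in> Arr C. Dom C \<beta> = Cod C \<phi> \<longrightarrow> Cmp C \<phi> \<beta> = Zero C (Dom C \<phi>) (Cod C \<beta>) \<longrightarrow>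
        (\<exists>!\<beta>'. \<beta>' \<in> Hom C (Cod C lam) (Cod C \<beta>) \<and> \<beta> = Cmp C lam \<beta>'))"

definition is_inverse :: "('o, 'm, 'x) icat_scheme \<Rightarrow> 'm \<Rightarrow> 'm \<Rightarrow> bool" where
  "is_inverse C f g \<longleftrightarrow> f \<in> Arr C \<and> g \<in> Hom C (Cod C f) (Dom C f) \<and>
     Cmp C f g = Idm C (Dom C f) \<and> Cmp C g f = Idm C (Cod C f)"

definition invertible :: "('o, 'm, 'x) icat_scheme \<Rightarrow> 'm \<Rightarrow> bool" where
  "invertible C f \<longleftrightarrow> (\<exists>g. is_inverse C f g)"

definition inverse_of :: "('o, 'm, 'x) icat_scheme \<Rightarrow> 'm \<Rightarrow> 'm" where
  "inverse_of C f = (THE g. is_inverse C f g)"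

definition is_dual_core_inverse :: "('o, 'm, 'x) icat_scheme \<Rightarrow> 'm \<Rightarrow> 'm \<Rightarrow> bool" where
  "is_dual_core_inverse C \<chi> \<phi> \<longleftrightarrow> \<chi> \<in> Hom C (Dom C \<phi>) (Dom C \<phi>) \<and>
     Star C (Cmp C \<chi> \<phi>) = Cmp C \<chi> \<phi> \<and>
     Cmp C (Cmp C \<chi> \<chi>) \<phi> = \<chi> \<and>
     Cmp C (Cmp C \<phi> \<phi>) \<chi> = \<phi>"

definition dual_core :: "('o, 'm, 'x) icat_scheme \<Rightarrow> 'm \<Rightarrow> 'm" where
  "dual_core C \<phi> = (THE \<chi>. is_dual_core_inverse C \<chi> \<phi>)"

end

theory Submission
  imports Defs
begin

locale ic =
  fixes C :: "('o,'m) icat"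
  assumes ax: "is_additive_inv_cat C"
begin

abbreviation cmp (infixr "\<cdot>" 70) where "f \<cdot> g \<equiv> Cmp C f g"
abbreviation st where "st f \<equiv> Star C f"

lemma cat: "is_category C" using ax unfolding is_additive_inv_cat_def is_additive_def is_preadditive_def by blast
lemma pre: "is_preadditive C" using ax unfolding is_additive_inv_cat_def is_additive_def by blast

lemma dom_obj[simp]: "f \<in> Arr C \<Longrightarrow> Dom C f \<in> Obj C" using cat unfolding is_category_def by blast
lemma cod_obj[simp]: "f \<in> Arr C \<Longrightarrow> Cod C f \<in> Obj C" using cat unfolding is_category_def by blast
lemma cmp_arr[simp]: "f \<in> Arr C \<Longrightarrow> g \<in> Arr C \<Longrightarrow> Cod C f = Dom C g \<Longrightarrow> f\<cdot>g \<in> Arr C"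
  using cat unfolding is_category_def Hom_def by blast
lemma cmp_dom[simp]: "f \<in> Arr C \<Longrightarrow> g \<in> Arr C \<Longrightarrow> Cod C f = Dom C g \<Longrightarrow> Dom C (f\<cdot>g) = Dom C f"
  using cat unfolding is_category_def Hom_def by blast
lemma cmp_cod[simp]: "f \<in> Arr C \<Longrightarrow> g \<in> Arr C \<Longrightarrow> Cod C f = Dom C g \<Longrightarrow> Cod C (f\<cdot>g) = Cod C g"
  using cat unfolding is_category_def Hom_def by blast
lemma assoc[simp]: "f \<in> Arr C \<Longrightarrow> g \<in> Arr C \<Longrightarrow> h \<in> Arr C \<Longrightarrow> Cod C f = Dom C g \<Longrightarrow> Cod C g = Dom C h
  \<Longrightarrow> (f\<cdot>g)\<cdot>h = f\<cdot>g\<cdot>h"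
  using cat unfolding is_category_def by blast
lemma idm_arr[simp]: "A \<in> Obj C \<Longrightarrow> Idm C A \<in> Arr C"
  using cat unfolding is_category_def Hom_def by blast
lemma idm_dom[simp]: "A \<in> Obj C \<Longrightarrow> Dom C (Idm C A) = A"
  using cat unfolding is_category_def Hom_def by blast
lemma idm_cod[simp]: "A \<in> Obj C \<Longrightarrow> Cod C (Idm C A) = A"
  using cat unfolding is_category_def Hom_def by blast
lemma idl[simp]: "f \<in> Arr C \<Longrightarrow> Dom C f = A \<Longrightarrow> Idm C A \<cdot> f = f"
  using cat unfolding is_category_def by blast
lemma idr[simp]: "f \<in> Arr C \<Longrightarrow> Cod C f = A \<Longrightarrow> f \<cdot> Idm C A = f"
  using cat unfolding is_category_def by blast

lemma objf: assumes "A \<in> Obj C" "B \<in> Obj C" shows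
  "Zero C A B \<in> Hom C A B \<and>
        (\<forall>f \<in> Hom C A B. \<forall>g \<in> Hom C A B. Add C f g \<in> Hom C A B) \<and>
        (\<forall>f \<in> Hom C A B. \<forall>g \<in> Hom C A B. \<forall>h \<in> Hom C A B.
           Add C (Add C f g) h = Add C f (Add C g h)) \<and>
        (\<forall>f \<in> Hom C A B. \<forall>g \<in> Hom C A B. Add C f g = Add C g f) \<and>
        (\<forall>f \<in> Hom C A B. Add C f (Zero C A B) = f) \<and>
        (\<forall>f \<in> Hom C A B. \<exists>g \<in> Hom C A B. Add C f g = Zero C A B)"
  using pre assms unfolding is_preadditive_def by blast
lemma zero_hom: "A \<in> Obj C \<Longrightarrow> B \<in> Obj C \<Longrightarrow> Zero C A B \<in> Hom C A B"
  using objf by blast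
lemma zero_arr[simp]: "A \<in> Obj C \<Longrightarrow> B \<in> Obj C \<Longrightarrow> Zero C A B \<in> Arr C"
  using zero_hom unfolding Hom_def by blast
lemma zero_dom[simp]: "A \<in> Obj C \<Longrightarrow> B \<in> Obj C \<Longrightarrow> Dom C (Zero C A B) = A"
  using zero_hom unfolding Hom_def by blast
lemma zero_cod[simp]: "A \<in> Obj C \<Longrightarrow> B \<in> Obj C \<Longrightarrow> Cod C (Zero C A B) = B"
  using zero_hom unfolding Hom_def by blast

lemma add_hom: "f \<in> Arr C \<Longrightarrow> g \<in> Arr C \<Longrightarrow> Dom C f = Dom C g \<Longrightarrow> Cod C f = Cod C g \<Longrightarrow>
   Add C f g \<in> Hom C (Dom C f) (Cod C f)"
proof -
  assume h: "f \<in> Arr C" "g \<in> Arr C" "Dom C f = Dom C g" "Cod C f = Cod C g"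
  have "Dom C f \<in> Obj C" "Cod C f \<in> Obj C" using h by auto
  thus ?thesis using objf[of "Dom C f" "Cod C f"] h unfolding Hom_def by auto
qed
lemma add_arr[simp]: "f \<in> Arr C \<Longrightarrow> g \<in> Arr C \<Longrightarrow> Dom C f = Dom C g \<Longrightarrow> Cod C f = Cod C g \<Longrightarrow> Add C f g \<in> Arr C"
  using add_hom unfolding Hom_def by blast
lemma add_dom[simp]: "f \<in> Arr C \<Longrightarrow> g \<in> Arr C \<Longrightarrow> Dom C f = Dom C g \<Longrightarrow> Cod C f = Cod C g \<Longrightarrow> Dom C (Add C f g) = Dom C f"
  using add_hom unfolding Hom_def by blast
lemma add_cod[simp]: "f \<in> Arr C \<Longrightarrow> g \<in> Arr C \<Longrightarrow> Dom C f = Dom C g \<Longrightarrow> Cod C f = Cod C g \<Longrightarrow> Cod C (Add C f g) = Cod C f"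
  using add_hom unfolding Hom_def by blast

lemma add_assoc: "f \<in> Arr C \<Longrightarrow> g \<in> Arr C \<Longrightarrow> h \<in> Arr C \<Longrightarrow> Dom C f = Dom C g \<Longrightarrow> Cod C f = Cod C g
  \<Longrightarrow> Dom C f = Dom C h \<Longrightarrow> Cod C f = Cod C h \<Longrightarrow> Add C (Add C f g) h = Add C f (Add C g h)"
proof -
  assume h: "f \<in> Arr C" "g \<in> Arr C" "h \<in> Arr C" "Dom C f = Dom C g" "Cod C f = Cod C g"
    "Dom C f = Dom C h" "Cod C f = Cod C h"
  have "Dom C f \<in> Obj C" "Cod C f \<in> Obj C" using h by auto
  thus ?thesis using objf[of "Dom C f" "Cod C f"] h unfolding Hom_def by auto
qed
lemma add_comm: "f \<in> Arr C \<Longrightarrow> g \<in> Arr C \<Longrightarrow> Dom C f = Dom C g \<Longrightarrow> Cod C f = Cod C g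
  \<Longrightarrow> Add C f g = Add C g f"
proof -
  assume h: "f \<in> Arr C" "g \<in> Arr C" "Dom C f = Dom C g" "Cod C f = Cod C g"
  have "Dom C f \<in> Obj C" "Cod C f \<in> Obj C" using h by auto
  thus ?thesis using objf[of "Dom C f" "Cod C f"] h unfolding Hom_def by auto
qed
lemma add_zero[simp]: "f \<in> Arr C \<Longrightarrow> Dom C f = A \<Longrightarrow> Cod C f = B \<Longrightarrow> Add C f (Zero C A B) = f"
proof -
  assume h: "f \<in> Arr C" "Dom C f = A" "Cod C f = B"
  have "A \<in> Obj C" "B \<in> Obj C" using h by auto
  thus ?thesis using objf[of "Dom C f" "Cod C f"] h unfolding Hom_def by auto
qed
lemma zero_add[simp]: "f \<in> Arr C \<Longrightarrow> Dom C f = A \<Longrightarrow> Cod C f = B \<Longrightarrow> Add C (Zero C A B) f = f"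
  using add_comm add_zero by (metis dom_obj cod_obj zero_arr zero_dom zero_cod)
lemma neg: "f \<in> Arr C \<Longrightarrow> \<exists>n. n \<in> Arr C \<and> Dom C n = Dom C f \<and> Cod C n = Cod C f \<and> Add C f n = Zero C (Dom C f) (Cod C f)"
proof -
  assume h: "f \<in> Arr C"
  have "Dom C f \<in> Obj C" "Cod C f \<in> Obj C" using h by auto
  thus ?thesis using objf[of "Dom C f" "Cod C f"] h unfolding Hom_def by auto
qed
lemma distr_r[simp]: "f \<in> Arr C \<Longrightarrow> g \<in> Arr C \<Longrightarrow> h \<in> Arr C \<Longrightarrow> Dom C f = Dom C g \<Longrightarrow> Cod C f = Cod C g
  \<Longrightarrow> Cod C f = Dom C h \<Longrightarrow> (Add C f g)\<cdot>h = Add C (f\<cdot>h) (g\<cdot>h)"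
  using pre unfolding is_preadditive_def by blast
lemma distr_l[simp]: "f \<in> Arr C \<Longrightarrow> g \<in> Arr C \<Longrightarrow> h \<in> Arr C \<Longrightarrow> Dom C f = Dom C g \<Longrightarrow> Cod C f = Cod C g
  \<Longrightarrow> Cod C h = Dom C f \<Longrightarrow> h\<cdot>(Add C f g) = Add C (h\<cdot>f) (h\<cdot>g)"
  using pre unfolding is_preadditive_def by blast

lemma cancel_r: assumes "f \<in> Arr C" "g \<in> Arr C" "h \<in> Arr C" "Dom C f = Dom C g" "Cod C f = Cod C g"
   "Dom C f = Dom C h" "Cod C f = Cod C h" "Add C f h = Add C g h" shows "f = g"
proof -
  obtain n where n: "n \<in> Arr C" "Dom C n = Dom C h" "Cod C n = Cod C h" "Add C h n = Zero C (Dom C h) (Cod C h)"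
    using neg[OF assms(3)] by blast
  have "f = Add C f (Add C h n)" using assms n by simp
  also have "\<dots> = Add C (Add C f h) n" using assms(1-7) n by (simp add: add_assoc)
  also have "\<dots> = Add C (Add C g h) n" using assms by simp
  also have "\<dots> = Add C g (Add C h n)" using assms(1-7) n by (simp add: add_assoc)
  also have "\<dots> = g" using assms n by simp
  finally show ?thesis .
qed
lemma cancel_l: assumes "f \<in> Arr C" "g \<in> Arr C" "h \<in> Arr C" "Dom C f = Dom C g" "Cod C f = Cod C g"
   "Dom C f = Dom C h" "Cod C f = Cod C h" "Add C h f = Add C h g" shows "f = g"
  using cancel_r[OF assms(1-7)] assms add_comm by metis

lemma cmp_zero[simp]: assumes "f \<in> Arr C" "Cod C f = B" "D \<in> Obj C" shows "f\<cdot>Zero C B D = Zero C (Dom C f) D"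
proof -
  have B: "B \<in> Obj C" using assms by auto
  have "Add C (f\<cdot>Zero C B D) (f\<cdot>Zero C B D) = f\<cdot>Add C (Zero C B D) (Zero C B D)" using assms B by (simp del: add_zero zero_add)
  also have "\<dots> = Add C (f\<cdot>Zero C B D) (Zero C (Dom C f) D)" using assms B by simp
  finally show ?thesis using cancel_l assms B by (metis cmp_arr cmp_cod cmp_dom dom_obj zero_arr zero_cod zero_dom)
qed
lemma zero_cmp[simp]: assumes "g \<in> Arr C" "Dom C g = B" "A \<in> Obj C" shows "Zero C A B\<cdot>g = Zero C A (Cod C g)"
proof -
  have B: "B \<in> Obj C" using assms by auto
  have "Add C (Zero C A B\<cdot>g) (Zero C A B\<cdot>g) = Add C (Zero C A B) (Zero C A B)\<cdot>g" using assms B by (simp del: add_zero zero_add)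
  also have "\<dots> = Add C (Zero C A B\<cdot>g) (Zero C A (Cod C g))" using assms B by simp
  finally show ?thesis using cancel_l assms B by (metis cmp_arr cmp_cod cmp_dom cod_obj zero_arr zero_cod zero_dom)
qed

lemma st_hom: "f \<in> Arr C \<Longrightarrow> st f \<in> Hom C (Cod C f) (Dom C f)"
  using ax unfolding is_additive_inv_cat_def by blast
lemma st_arr[simp]: "f \<in> Arr C \<Longrightarrow> st f \<in> Arr C" using st_hom unfolding Hom_def by blast
lemma st_dom[simp]: "f \<in> Arr C \<Longrightarrow> Dom C (st f) = Cod C f" using st_hom unfolding Hom_def by blast
lemma st_cod[simp]: "f \<in> Arr C \<Longrightarrow> Cod C (st f) = Dom C f" using st_hom unfolding Hom_def by blast
lemma st_st[simp]: "f \<in> Arr C \<Longrightarrow> st (st f) = f" using ax unfolding is_additive_inv_cat_def by blast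
lemma st_cmp[simp]: "f \<in> Arr C \<Longrightarrow> g \<in> Arr C \<Longrightarrow> Cod C f = Dom C g \<Longrightarrow> st (f\<cdot>g) = st g \<cdot> st f"
  using ax unfolding is_additive_inv_cat_def by blast
lemma st_add[simp]: "f \<in> Arr C \<Longrightarrow> g \<in> Arr C \<Longrightarrow> Dom C f = Dom C g \<Longrightarrow> Cod C f = Cod C g \<Longrightarrow>
   st (Add C f g) = Add C (st f) (st g)"
  using ax unfolding is_additive_inv_cat_def by blast
lemma st_zero[simp]: assumes "A \<in> Obj C" "B \<in> Obj C" shows "st (Zero C A B) = Zero C B A"
proof -
  have "Add C (st (Zero C A B)) (st (Zero C A B)) = st (Add C (Zero C A B) (Zero C A B))" using assms by (simp del: add_zero zero_add)
  also have "\<dots> = Add C (st (Zero C A B)) (Zero C B A)" using assms by simp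
  finally show ?thesis using cancel_l assms by (metis st_arr st_dom st_cod zero_arr zero_cod zero_dom)
qed
lemma st_idm[simp]: assumes "A \<in> Obj C" shows "st (Idm C A) = Idm C A"
proof -
  have "st (st (Idm C A) \<cdot> Idm C A) = st (Idm C A) \<cdot> st (st (Idm C A))"
    using assms st_cmp[of "st (Idm C A)" "Idm C A"] by simp
  thus ?thesis using assms by simp
qed

lemma tail2: assumes "f\<cdot>g = h" "f\<in>Arr C" "g\<in>Arr C" "Cod C f = Dom C g" "z\<in>Arr C" "Dom C z = Cod C g"
  shows "f\<cdot>(g\<cdot>z) = h\<cdot>z"
  using assms assoc[of f g z] by metis



lemma coker_basic: "is_cokernel C lam a \<Longrightarrow> lam \<in> Arr C \<and> Dom C lam = Cod C a \<and> a\<cdot>lam = Zero C (Dom C a) (Cod C lam)"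
  unfolding is_cokernel_def by blast

lemma coker_univ: assumes "is_cokernel C lam a" "b \<in> Arr C" "Dom C b = Cod C a" "a\<cdot>b = Zero C (Dom C a) (Cod C b)"
  shows "\<exists>!b'. b' \<in> Hom C (Cod C lam) (Cod C b) \<and> b = lam\<cdot>b'"
proof -
  have H: "\<forall>\<beta> \<in> Arr C. Dom C \<beta> = Cod C a \<longrightarrow> a\<cdot>\<beta> = Zero C (Dom C a) (Cod C \<beta>) \<longrightarrow>
        (\<exists>!\<beta>'. \<beta>' \<in> Hom C (Cod C lam) (Cod C \<beta>) \<and> \<beta> = lam\<cdot>\<beta>')"
    using assms(1) unfolding is_cokernel_def by (elim conjE)
  show ?thesis by (rule H[rule_format, OF assms(2,3,4)])
qed

lemma coker_ex: assumes "is_cokernel C lam a" "b \<in> Arr C" "Dom C b = Cod C a" "a\<cdot>b = Zero C (Dom C a) (Cod C b)"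
  shows "\<exists>b'. b' \<in> Arr C \<and> Dom C b' = Cod C lam \<and> Cod C b' = Cod C b \<and> b = lam\<cdot>b'"
proof -
  obtain b' where "b' \<in> Hom C (Cod C lam) (Cod C b)" "b = lam\<cdot>b'" using coker_univ[OF assms] by blast
  thus ?thesis unfolding Hom_def by auto
qed

lemma coker_uniq: assumes "is_cokernel C lam a" "a \<in> Arr C" "f \<in> Arr C" "g \<in> Arr C" "Dom C f = Cod C lam"
   "Dom C g = Cod C lam" "Cod C f = Cod C g" "lam\<cdot>f = lam\<cdot>g" shows "f = g"
proof -
  have l: "lam \<in> Arr C" "Dom C lam = Cod C a" "a\<cdot>lam = Zero C (Dom C a) (Cod C lam)" using coker_basic[OF assms(1)] by auto
  have b: "lam\<cdot>f \<in> Arr C" "Dom C (lam\<cdot>f) = Cod C a" using l assms by auto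
  have "a\<cdot>(lam\<cdot>f) = Zero C (Dom C a) (Cod C lam)\<cdot>f" using tail2[OF l(3)] l assms by simp
  also have "\<dots> = Zero C (Dom C a) (Cod C (lam\<cdot>f))" using l assms by simp
  finally have z: "a\<cdot>(lam\<cdot>f) = Zero C (Dom C a) (Cod C (lam\<cdot>f))" .
  have U: "\<exists>!b'. b' \<in> Hom C (Cod C lam) (Cod C (lam\<cdot>f)) \<and> lam\<cdot>f = lam\<cdot>b'"
    by (rule coker_univ[OF assms(1) b z])
  have P: "f \<in> Hom C (Cod C lam) (Cod C (lam\<cdot>f)) \<and> lam\<cdot>f = lam\<cdot>f"
    "g \<in> Hom C (Cod C lam) (Cod C (lam\<cdot>f)) \<and> lam\<cdot>f = lam\<cdot>g"
    using assms l unfolding Hom_def by auto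
  show ?thesis using U P by blast
qed

lemma back_dir:
  assumes a: "a \<in> Hom C X X" and lam: "lam \<in> Hom C X L" and ck: "is_cokernel C lam a"
   and kk: "k \<in> Arr C" "Cod C k = X" "k\<cdot>a = Zero C (Dom C k) X"
   and s: "is_inverse C (k\<cdot>lam) s"
   and ud: "u = Add C (a\<cdot>a\<cdot>a\<cdot>st a) (lam\<cdot>st lam)"
   and ui: "is_inverse C u ui"
  shows "is_dual_core_inverse C (st a\<cdot>ui\<cdot>a\<cdot>a) a"
proof -
  define K where "K = Dom C k"
  note ty1[simp] = kk(1,2) K_def[symmetric]
  have ty2[simp]: "a \<in> Arr C" "Dom C a = X" "Cod C a = X" "lam \<in> Arr C" "Dom C lam = X" "Cod C lam = L"
    using a lam unfolding Hom_def by auto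
  have ob[simp]: "X \<in> Obj C" "L \<in> Obj C" "K \<in> Obj C" using ty2 kk dom_obj cod_obj K_def by metis+
  have al: "a\<cdot>lam = Zero C X L" using coker_basic[OF ck] by simp
  have ka: "k\<cdot>a = Zero C K X" using kk(3) by simp
  have ty3[simp]: "s \<in> Arr C" "Dom C s = L" "Cod C s = K" using s unfolding is_inverse_def Hom_def by auto
  have kls: "k\<cdot>lam\<cdot>s = Idm C K" "s\<cdot>k\<cdot>lam = Idm C L" using s unfolding is_inverse_def by auto
  have ty4[simp]: "u \<in> Arr C" "Dom C u = X" "Cod C u = X" using ud by auto
  have ty5[simp]: "ui \<in> Arr C" "Dom C ui = X" "Cod C ui = X" using ui unfolding is_inverse_def Hom_def by auto
  have uui: "u\<cdot>ui = Idm C X" "ui\<cdot>u = Idm C X" using ui unfolding is_inverse_def by auto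
  have al_t: "a\<cdot>lam\<cdot>z = Zero C X (Cod C z)" if "z \<in> Arr C" "Dom C z = L" for z
    using tail2[OF al] that by simp
  have ka_t: "k\<cdot>a\<cdot>z = Zero C K (Cod C z)" if "z \<in> Arr C" "Dom C z = X" for z
    using tail2[OF ka] that by simp
  have kls_t: "k\<cdot>lam\<cdot>s\<cdot>z = z" if "z \<in> Arr C" "Dom C z = K" for z
    using tail2[OF kls(1)] that by simp
  have k1: "k\<cdot>u = k\<cdot>lam\<cdot>st lam" by (simp add: ud ka_t)
  have S1: "k = k\<cdot>lam\<cdot>st lam\<cdot>ui"
  proof -
    have "k = k\<cdot>(u\<cdot>ui)" by (simp add: uui)
    also have "\<dots> = (k\<cdot>u)\<cdot>ui" by simp
    also have "\<dots> = k\<cdot>lam\<cdot>st lam\<cdot>ui" by (simp add: k1)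
    finally show ?thesis .
  qed
  have S2: "s\<cdot>k = st lam\<cdot>ui"
  proof -
    have "s\<cdot>k = s\<cdot>(k\<cdot>lam\<cdot>st lam\<cdot>ui)" by (simp only: S1[symmetric])
    also have "\<dots> = (s\<cdot>k\<cdot>lam)\<cdot>st lam\<cdot>ui" by simp
    also have "\<dots> = st lam\<cdot>ui" by (simp add: kls)
    finally show ?thesis .
  qed
  have S4: "Add C (a\<cdot>a\<cdot>a\<cdot>st a\<cdot>ui) (lam\<cdot>s\<cdot>k) = Idm C X"
  proof -
    have "Idm C X = u\<cdot>ui" using uui by simp
    also have "\<dots> = Add C (a\<cdot>a\<cdot>a\<cdot>st a\<cdot>ui) (lam\<cdot>st lam\<cdot>ui)" by (simp add: ud)
    also have "\<dots> = Add C (a\<cdot>a\<cdot>a\<cdot>st a\<cdot>ui) (lam\<cdot>s\<cdot>k)" by (simp add: S2)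
    finally show ?thesis by simp
  qed
  have S6: "a\<cdot>a\<cdot>a\<cdot>st a\<cdot>ui\<cdot>a = a"
  proof -
    have "a = (Add C (a\<cdot>a\<cdot>a\<cdot>st a\<cdot>ui) (lam\<cdot>s\<cdot>k))\<cdot>a" by (simp add: S4)
    also have "\<dots> = a\<cdot>a\<cdot>a\<cdot>st a\<cdot>ui\<cdot>a" by (simp add: ka)
    finally show ?thesis by simp
  qed
  have S7: "Add C (a\<cdot>a\<cdot>st a\<cdot>ui\<cdot>a) (lam\<cdot>s\<cdot>k) = Idm C X"
  proof -
    define f where "f = Add C (a\<cdot>a\<cdot>st a\<cdot>ui\<cdot>a) (lam\<cdot>s\<cdot>k)"
    have tf[simp]: "f \<in> Arr C" "Dom C f = X" "Cod C f = X" unfolding f_def by auto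
    obtain n where n[simp]: "n \<in> Arr C" "Dom C n = X" "Cod C n = X" and n0: "Add C (Idm C X) n = Zero C X X"
      using neg[of "Idm C X"] by auto
    have af: "a\<cdot>f = a" unfolding f_def by (simp add: S6 al_t)
    have kf: "k\<cdot>f = k" unfolding f_def by (simp add: ka_t kls_t)
    have "a\<cdot>Add C f n = a\<cdot>Add C (Idm C X) n" by (simp add: af)
    also have "\<dots> = Zero C X X" by (simp only: n0) simp
    finally have "a\<cdot>Add C f n = Zero C (Dom C a) (Cod C (Add C f n))" by simp
    then obtain b where b: "b \<in> Arr C" "Dom C b = L" "Cod C b = X" "Add C f n = lam\<cdot>b"
      using coker_ex[OF ck, of "Add C f n"] by auto
    have "k\<cdot>Add C f n = k\<cdot>Add C (Idm C X) n" by (simp add: kf)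
    also have "\<dots> = Zero C K X" by (simp only: n0) simp
    finally have "k\<cdot>lam\<cdot>b = Zero C K X" using b by simp
    hence "s\<cdot>k\<cdot>lam\<cdot>b = Zero C L X" using b by simp
    hence "b = Zero C L X" using tail2[OF kls(2), of b] b by simp
    hence "Add C f n = Add C (Idm C X) n" using b n0 by simp
    hence "f = Idm C X" using cancel_r[of f "Idm C X" n] by simp
    thus ?thesis unfolding f_def .
  qed
  have S8: "a\<cdot>a\<cdot>st a\<cdot>ui\<cdot>a\<cdot>a = a"
  proof -
    have "a = (Add C (a\<cdot>a\<cdot>st a\<cdot>ui\<cdot>a) (lam\<cdot>s\<cdot>k))\<cdot>a" by (simp add: S7)
    also have "\<dots> = a\<cdot>a\<cdot>st a\<cdot>ui\<cdot>a\<cdot>a" by (simp add: ka)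
    finally show ?thesis by simp
  qed
  have S8_t: "a\<cdot>a\<cdot>st a\<cdot>ui\<cdot>a\<cdot>a\<cdot>z = a\<cdot>z" if "z \<in> Arr C" "Dom C z = X" for z
    using tail2[OF S8] that by simp
  have stk: "st a\<cdot>st k = Zero C X K" using arg_cong[OF ka, of st] by simp
  have stk_t: "st a\<cdot>st k\<cdot>z = Zero C X (Cod C z)" if "z \<in> Arr C" "Dom C z = K" for z
    using tail2[OF stk] that by simp
  have sl: "st lam\<cdot>st k\<cdot>st s = Idm C L" using arg_cong[OF kls(2), of st] by simp
  have T1: "u\<cdot>st k\<cdot>st s = lam" by (simp add: ud stk_t sl)
  have T1': "ui\<cdot>lam = st k\<cdot>st s"
  proof -
    have "ui\<cdot>lam = ui\<cdot>(u\<cdot>st k\<cdot>st s)" by (simp only: T1)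
    also have "\<dots> = (ui\<cdot>u)\<cdot>st k\<cdot>st s" by simp
    also have "\<dots> = st k\<cdot>st s" by (simp add: uui)
    finally show ?thesis .
  qed
  have T2: "st a\<cdot>ui\<cdot>lam = Zero C X L" by (simp add: T1' stk_t)
  have T2_t: "st a\<cdot>ui\<cdot>lam\<cdot>z = Zero C X (Cod C z)" if "z \<in> Arr C" "Dom C z = L" for z
    using tail2[OF T2] that by simp
  have T3: "(st a\<cdot>ui\<cdot>a\<cdot>a\<cdot>a)\<cdot>st a = st a"
  proof -
    have "st a = st a\<cdot>(ui\<cdot>u)" by (simp add: uui)
    also have "\<dots> = Add C (st a\<cdot>ui\<cdot>a\<cdot>a\<cdot>a\<cdot>st a) (st a\<cdot>ui\<cdot>lam\<cdot>st lam)" by (simp add: ud)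
    also have "\<dots> = st a\<cdot>ui\<cdot>a\<cdot>a\<cdot>a\<cdot>st a" by (simp add: T2_t)
    finally show ?thesis by simp
  qed
  have T4: "a\<cdot>st a\<cdot>st a\<cdot>st a\<cdot>st ui\<cdot>a = a" using arg_cong[OF T3, of st] by simp
  have T5: "(st a\<cdot>ui\<cdot>a\<cdot>a\<cdot>a)\<cdot>st (st a\<cdot>ui\<cdot>a\<cdot>a\<cdot>a) = st a\<cdot>ui\<cdot>a\<cdot>a\<cdot>a" by (simp add: T4)
  have T6: "st (st a\<cdot>ui\<cdot>a\<cdot>a\<cdot>a) = st a\<cdot>ui\<cdot>a\<cdot>a\<cdot>a"
  proof -
    have "st (st a\<cdot>ui\<cdot>a\<cdot>a\<cdot>a) = st ((st a\<cdot>ui\<cdot>a\<cdot>a\<cdot>a)\<cdot>st (st a\<cdot>ui\<cdot>a\<cdot>a\<cdot>a))" by (simp only: T5)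
    also have "\<dots> = (st a\<cdot>ui\<cdot>a\<cdot>a\<cdot>a)\<cdot>st (st a\<cdot>ui\<cdot>a\<cdot>a\<cdot>a)" by simp
    also have "\<dots> = st a\<cdot>ui\<cdot>a\<cdot>a\<cdot>a" by (rule T5)
    finally show ?thesis .
  qed
  have T6': "st a\<cdot>st a\<cdot>st a\<cdot>st ui\<cdot>a = st a\<cdot>ui\<cdot>a\<cdot>a\<cdot>a" using T6 by simp
  show ?thesis unfolding is_dual_core_inverse_def Hom_def
    by (simp add: T6' S8_t S8)
qed



lemma dci_unique:
  assumes a: "a \<in> Hom C X X" and dx: "is_dual_core_inverse C x a" and dz: "is_dual_core_inverse C z a"
  shows "x = z"
proof -
  have ty[simp]: "a \<in> Arr C" "Dom C a = X" "Cod C a = X" "x \<in> Arr C" "Dom C x = X" "Cod C x = X"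
    "z \<in> Arr C" "Dom C z = X" "Cod C z = X"
    using a dx dz unfolding Hom_def is_dual_core_inverse_def by auto
  have sax: "st (x\<cdot>a) = x\<cdot>a" and xxa: "x\<cdot>x\<cdot>a = x" and aax: "a\<cdot>a\<cdot>x = a"
    using dx unfolding is_dual_core_inverse_def by auto
  have saz: "st (z\<cdot>a) = z\<cdot>a" and zza: "z\<cdot>z\<cdot>a = z" and aaz: "a\<cdot>a\<cdot>z = a"
    using dz unfolding is_dual_core_inverse_def by auto
  have U1: "a\<cdot>x\<cdot>a = a"
  proof -
    have "a\<cdot>x\<cdot>a = (a\<cdot>a\<cdot>x)\<cdot>x\<cdot>a" by (simp add: aax)
    also have "\<dots> = a\<cdot>a\<cdot>(x\<cdot>x\<cdot>a)" by simp
    also have "\<dots> = a" by (simp add: xxa aax)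
    finally show ?thesis .
  qed
  have U1z: "a\<cdot>z\<cdot>a = a"
  proof -
    have "a\<cdot>z\<cdot>a = (a\<cdot>a\<cdot>z)\<cdot>z\<cdot>a" by (simp add: aaz)
    also have "\<dots> = a\<cdot>a\<cdot>(z\<cdot>z\<cdot>a)" by simp
    also have "\<dots> = a" by (simp add: zza aaz)
    finally show ?thesis .
  qed
  have Ux: "x\<cdot>a\<cdot>x = x"
  proof -
    have "x\<cdot>a\<cdot>x = (x\<cdot>x\<cdot>a)\<cdot>a\<cdot>x" by (simp add: xxa)
    also have "\<dots> = x\<cdot>x\<cdot>(a\<cdot>a\<cdot>x)" by simp
    also have "\<dots> = x" by (simp add: xxa aax)
    finally show ?thesis .
  qed
  have Uz: "z\<cdot>a\<cdot>z = z"
  proof -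
    have "z\<cdot>a\<cdot>z = (z\<cdot>z\<cdot>a)\<cdot>a\<cdot>z" by (simp add: zza)
    also have "\<dots> = z\<cdot>z\<cdot>(a\<cdot>a\<cdot>z)" by simp
    also have "\<dots> = z" by (simp add: zza aaz)
    finally show ?thesis .
  qed
  have U1_t: "a\<cdot>x\<cdot>a\<cdot>w = a\<cdot>w" if "w \<in> Arr C" "Dom C w = X" for w
    using tail2[OF U1] that by simp
  have pq: "(x\<cdot>a)\<cdot>(z\<cdot>a) = x\<cdot>a" by (simp add: U1z)
  have qp: "(z\<cdot>a)\<cdot>(x\<cdot>a) = z\<cdot>a" by (simp add: U1)
  have P: "x\<cdot>a = z\<cdot>a"
  proof -
    have "x\<cdot>a = st ((x\<cdot>a)\<cdot>(z\<cdot>a))" by (simp only: pq sax)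
    also have "\<dots> = st (z\<cdot>a)\<cdot>st (x\<cdot>a)" by simp
    also have "\<dots> = (z\<cdot>a)\<cdot>(x\<cdot>a)" by (simp only: sax saz)
    also have "\<dots> = z\<cdot>a" by (rule qp)
    finally show ?thesis .
  qed
  have P_t: "x\<cdot>a\<cdot>w = z\<cdot>a\<cdot>w" if "w \<in> Arr C" "Dom C w = X" for w
    using tail2[OF P] that by simp
  have G2: "a\<cdot>x\<cdot>x\<cdot>a = a\<cdot>x" by (simp add: xxa)
  have G2_t: "a\<cdot>x\<cdot>x\<cdot>a\<cdot>w = a\<cdot>x\<cdot>w" if "w \<in> Arr C" "Dom C w = X" for w
    using tail2[OF G2] that by simp
  have E: "a\<cdot>x = a\<cdot>z"
  proof -
    have "a\<cdot>x = a\<cdot>x\<cdot>x\<cdot>a" by (simp add: G2)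
    also have "\<dots> = a\<cdot>x\<cdot>x\<cdot>a\<cdot>a\<cdot>z" by (simp add: aaz)
    also have "\<dots> = a\<cdot>x\<cdot>a\<cdot>z" by (simp add: G2_t)
    also have "\<dots> = a\<cdot>z" by (simp add: U1_t)
    finally show ?thesis .
  qed
  have "x = x\<cdot>a\<cdot>x" by (simp add: Ux)
  also have "\<dots> = x\<cdot>a\<cdot>z" by (simp add: E)
  also have "\<dots> = z\<cdot>a\<cdot>z" by (simp add: P_t)
  also have "\<dots> = z" by (rule Uz)
  finally show ?thesis .
qed

lemma inv_unique: "is_inverse C f g \<Longrightarrow> is_inverse C f g' \<Longrightarrow> g = g'"
proof -
  assume g: "is_inverse C f g" and g': "is_inverse C f g'"
  have ty[simp]: "f \<in> Arr C" "g \<in> Arr C" "Dom C g = Cod C f" "Cod C g = Dom C f"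
    "g' \<in> Arr C" "Dom C g' = Cod C f" "Cod C g' = Dom C f"
    using g g' unfolding is_inverse_def Hom_def by auto
  have e: "f\<cdot>g' = Idm C (Dom C f)" "g\<cdot>f = Idm C (Cod C f)" using g g' unfolding is_inverse_def by auto
  have "g = g\<cdot>(f\<cdot>g')" by (simp add: e)
  also have "\<dots> = (g\<cdot>f)\<cdot>g'" by simp
  also have "\<dots> = g'" by (simp add: e)
  finally show ?thesis .
qed

lemma fwd_dir:
  assumes a: "a \<in> Hom C X X" and lam: "lam \<in> Hom C X L" and ck: "is_cokernel C lam a"
   and dx: "is_dual_core_inverse C x a"
   and ud: "u = Add C (a\<cdot>a\<cdot>a\<cdot>st a) (lam\<cdot>st lam)"
  shows "\<exists>k. is_kernel C k a \<and> invertible C (k\<cdot>lam) \<and> invertible C u"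
proof -
  have ty[simp]: "a \<in> Arr C" "Dom C a = X" "Cod C a = X" "x \<in> Arr C" "Dom C x = X" "Cod C x = X"
    "lam \<in> Arr C" "Dom C lam = X" "Cod C lam = L"
    using a lam dx unfolding Hom_def is_dual_core_inverse_def by auto
  have ob[simp]: "X \<in> Obj C" "L \<in> Obj C" using ty dom_obj cod_obj by metis+
  have sax: "st a\<cdot>st x = x\<cdot>a" and xxa: "x\<cdot>x\<cdot>a = x" and aax: "a\<cdot>a\<cdot>x = a"
    using dx unfolding is_dual_core_inverse_def by auto
  have al: "a\<cdot>lam = Zero C X L" using coker_basic[OF ck] by simp
  have U1: "a\<cdot>x\<cdot>a = a"
  proof -
    have "a\<cdot>x\<cdot>a = (a\<cdot>a\<cdot>x)\<cdot>x\<cdot>a" by (simp add: aax)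
    also have "\<dots> = a\<cdot>a\<cdot>(x\<cdot>x\<cdot>a)" by simp
    also have "\<dots> = a" by (simp add: xxa aax)
    finally show ?thesis .
  qed
  have U1_t: "a\<cdot>x\<cdot>a\<cdot>w = a\<cdot>w" if "w \<in> Arr C" "Dom C w = X" for w
    using tail2[OF U1] that by simp
  have aax_t: "a\<cdot>a\<cdot>x\<cdot>w = a\<cdot>w" if "w \<in> Arr C" "Dom C w = X" for w
    using tail2[OF aax] that by simp
  have xxa_t: "x\<cdot>x\<cdot>a\<cdot>w = x\<cdot>w" if "w \<in> Arr C" "Dom C w = X" for w
    using tail2[OF xxa] that by simp
  have sax_t: "st a\<cdot>st x\<cdot>w = x\<cdot>a\<cdot>w" if "w \<in> Arr C" "Dom C w = X" for w
    using tail2[OF sax] that by simp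
  have xl: "x\<cdot>lam = Zero C X L"
  proof -
    have "x\<cdot>lam = (x\<cdot>x\<cdot>a)\<cdot>lam" by (simp add: xxa)
    also have "\<dots> = Zero C X L" by (simp add: al)
    finally show ?thesis .
  qed
  have xl_t: "x\<cdot>lam\<cdot>w = Zero C X (Cod C w)" if "w \<in> Arr C" "Dom C w = L" for w
    using tail2[OF xl] that by simp
  obtain n where n[simp]: "n \<in> Arr C" "Dom C n = X" "Cod C n = X" and n0: "Add C (a\<cdot>x) n = Zero C X X"
    using neg[of "a\<cdot>x"] by auto
  have am: "a\<cdot>Add C (Idm C X) n = Zero C X X"
  proof -
    have "a\<cdot>Add C (Idm C X) n = Add C (a\<cdot>a\<cdot>x) (a\<cdot>n)" by (simp add: aax)
    also have "\<dots> = a\<cdot>Add C (a\<cdot>x) n" by simp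
    also have "\<dots> = Zero C X X" by (simp only: n0) simp
    finally show ?thesis .
  qed
  obtain b where b[simp]: "b \<in> Arr C" "Dom C b = L" "Cod C b = X" and bm: "Add C (Idm C X) n = lam\<cdot>b"
    using coker_ex[OF ck, of "Add C (Idm C X) n"] am by auto
  have KEY: "Add C (a\<cdot>x) (lam\<cdot>b) = Idm C X"
  proof -
    have "Add C (a\<cdot>x) (lam\<cdot>b) = Add C (lam\<cdot>b) (a\<cdot>x)" by (rule add_comm) auto
    also have "\<dots> = Add C (Add C (Idm C X) n) (a\<cdot>x)" by (simp only: bm)
    also have "\<dots> = Add C (Idm C X) (Add C n (a\<cdot>x))" by (rule add_assoc) auto
    also have "\<dots> = Add C (Idm C X) (Add C (a\<cdot>x) n)" using add_comm[of n "a\<cdot>x"] by simp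
    also have "\<dots> = Idm C X" by (simp add: n0)
    finally show ?thesis .
  qed
  have ba: "b\<cdot>a = Zero C L X"
  proof -
    have "a = (Add C (a\<cdot>x) (lam\<cdot>b))\<cdot>a" by (simp add: KEY)
    also have "\<dots> = Add C (lam\<cdot>b\<cdot>a) a" by (simp add: U1 add_comm[of "a"])
    finally have "Add C (lam\<cdot>b\<cdot>a) a = Add C (Zero C X X) a" by simp
    hence "lam\<cdot>b\<cdot>a = Zero C X X" using cancel_r[of "lam\<cdot>b\<cdot>a" "Zero C X X" a] by simp
    hence "lam\<cdot>(b\<cdot>a) = lam\<cdot>Zero C L X" by simp
    thus ?thesis using coker_uniq[OF ck, of "b\<cdot>a" "Zero C L X"] by simp
  qed
  have bl: "b\<cdot>lam = Idm C L"
  proof -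
    have "lam = (Add C (a\<cdot>x) (lam\<cdot>b))\<cdot>lam" by (simp add: KEY)
    also have "\<dots> = lam\<cdot>b\<cdot>lam" by (simp add: xl)
    finally have "lam\<cdot>(b\<cdot>lam) = lam\<cdot>Idm C L" by simp
    thus ?thesis using coker_uniq[OF ck, of "b\<cdot>lam" "Idm C L"] by simp
  qed
  have ba_t: "b\<cdot>a\<cdot>w = Zero C L (Cod C w)" if "w \<in> Arr C" "Dom C w = X" for w
    using tail2[OF ba] that by simp
  have bl_t: "b\<cdot>lam\<cdot>w = w" if "w \<in> Arr C" "Dom C w = L" for w
    using tail2[OF bl] that by simp
  have ker: "is_kernel C b a"
    unfolding is_kernel_def
  proof (intro conjI ballI impI)
    show "b \<in> Arr C" "Cod C b = Dom C a" "b\<cdot>a = Zero C (Dom C b) (Cod C a)" using ba by auto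
  next
    fix \<alpha> assume al1: "\<alpha> \<in> Arr C" "Cod C \<alpha> = Dom C a" and al2: "\<alpha>\<cdot>a = Zero C (Dom C \<alpha>) (Cod C a)"
    have tt[simp]: "Cod C \<alpha> = X" "Dom C \<alpha> \<in> Obj C" using al1 by auto
    have al2_t: "\<alpha>\<cdot>a\<cdot>w = Zero C (Dom C \<alpha>) (Cod C w)" if "w \<in> Arr C" "Dom C w = X" for w
      using tail2[OF al2] that al1 by simp
    have fac: "\<alpha> = (\<alpha>\<cdot>lam)\<cdot>b"
    proof -
      have "\<alpha> = \<alpha>\<cdot>Add C (a\<cdot>x) (lam\<cdot>b)" using al1 by (simp add: KEY)
      also have "\<dots> = (\<alpha>\<cdot>lam)\<cdot>b" using al1 by (simp add: al2_t)
      finally show ?thesis .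
    qed
    show "\<exists>!\<alpha>'. \<alpha>' \<in> Hom C (Dom C \<alpha>) (Dom C b) \<and> \<alpha> = \<alpha>'\<cdot>b"
    proof (rule ex1I[of _ "\<alpha>\<cdot>lam"])
      show "\<alpha>\<cdot>lam \<in> Hom C (Dom C \<alpha>) (Dom C b) \<and> \<alpha> = (\<alpha>\<cdot>lam)\<cdot>b"
        using al1 fac unfolding Hom_def by auto
    next
      fix c assume c: "c \<in> Hom C (Dom C \<alpha>) (Dom C b) \<and> \<alpha> = c\<cdot>b"
      hence ct[simp]: "c \<in> Arr C" "Cod C c = L" unfolding Hom_def by auto
      have "\<alpha>\<cdot>lam = c\<cdot>b\<cdot>lam" using c by simp
      also have "\<dots> = c" by (simp add: bl)
      finally show "c = \<alpha>\<cdot>lam" by simp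
    qed
  qed
  have inv1: "invertible C (b\<cdot>lam)"
    unfolding invertible_def is_inverse_def Hom_def using bl by (intro exI[of _ "Idm C L"]) simp
  define v where "v = Add C (st x\<cdot>x\<cdot>x\<cdot>x) (st b\<cdot>b)"
  have tv[simp]: "v \<in> Arr C" "Dom C v = X" "Cod C v = X" unfolding v_def by auto
  have tu[simp]: "u \<in> Arr C" "Dom C u = X" "Cod C u = X" unfolding ud by auto
  have XAS: "x\<cdot>a\<cdot>st a = st a"
  proof -
    have "st a\<cdot>st x\<cdot>st a = st a" using arg_cong[OF U1, of st] by simp
    thus ?thesis by (simp add: sax_t)
  qed
  have stb: "st a\<cdot>st b = Zero C X L" using arg_cong[OF ba, of st] by simp
  have stb_t: "st a\<cdot>st b\<cdot>w = Zero C X (Cod C w)" if "w \<in> Arr C" "Dom C w = L" for w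
    using tail2[OF stb] that by simp
  have stxl: "st lam\<cdot>st x = Zero C L X" using arg_cong[OF xl, of st] by simp
  have stxl_t: "st lam\<cdot>st x\<cdot>w = Zero C L (Cod C w)" if "w \<in> Arr C" "Dom C w = X" for w
    using tail2[OF stxl] that by simp
  have stbl: "st lam\<cdot>st b = Idm C L" using arg_cong[OF bl, of st] by simp
  have stbl_t: "st lam\<cdot>st b\<cdot>w = w" if "w \<in> Arr C" "Dom C w = L" for w
    using tail2[OF stbl] that by simp
  have KS: "Add C (st x\<cdot>st a) (st b\<cdot>st lam) = Idm C X" using arg_cong[OF KEY, of st] by simp
  have uv: "u\<cdot>v = Idm C X" unfolding ud v_def
    by (simp add: sax_t U1_t aax_t aax stb_t stxl_t stbl_t KEY)
  have vu: "v\<cdot>u = Idm C X" unfolding ud v_def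
    by (simp add: xxa_t XAS xl_t ba_t bl_t KS)
  have inv2: "invertible C u"
    unfolding invertible_def is_inverse_def Hom_def using uv vu by (intro exI[of _ v]) simp
  show ?thesis using ker inv1 inv2 by blast
qed

end

theorem theorem2p4:
  fixes C :: "('o, 'm) icat" and \<phi> lam :: 'm and X L :: 'o
  assumes "is_additive_inv_cat C"
    and "\<phi> \<in> Hom C X X"
    and "lam \<in> Hom C X L"
    and "is_cokernel C lam \<phi>"
  shows "((\<exists>\<chi>. is_dual_core_inverse C \<chi> \<phi>) \<longleftrightarrow>
           (\<exists>\<kappa>. is_kernel C \<kappa> \<phi> \<and> invertible C (Cmp C \<kappa> lam) \<and>
              invertible C (Add C (Cmp C (Cmp C \<phi> (Cmp C \<phi> \<phi>)) (Star C \<phi>))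
                                  (Cmp C lam (Star C lam))))) \<and>
         ((\<exists>\<chi>. is_dual_core_inverse C \<chi> \<phi>) \<longrightarrow>
           dual_core C \<phi> =
             Cmp C (Cmp C (Star C \<phi>)
               (inverse_of C (Add C (Cmp C (Cmp C \<phi> (Cmp C \<phi> \<phi>)) (Star C \<phi>))
                                    (Cmp C lam (Star C lam)))))
               (Cmp C \<phi> \<phi>))"
proof -
  interpret ic C by unfold_locales (rule assms(1))
  have ty: "\<phi> \<in> Arr C" "Dom C \<phi> = X" "Cod C \<phi> = X" "lam \<in> Arr C" "Dom C lam = X" "Cod C lam = L"
    using assms(2,3) unfolding Hom_def by auto
  define U where "U = Add C (Cmp C (Cmp C \<phi> (Cmp C \<phi> \<phi>)) (Star C \<phi>)) (Cmp C lam (Star C lam))"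
  have ud: "U = Add C (\<phi>\<cdot>\<phi>\<cdot>\<phi>\<cdot>st \<phi>) (lam\<cdot>st lam)" unfolding U_def using ty by simp
  have F: "\<exists>\<kappa>. is_kernel C \<kappa> \<phi> \<and> invertible C (\<kappa>\<cdot>lam) \<and> invertible C U"
    if "\<exists>\<chi>. is_dual_core_inverse C \<chi> \<phi>"
    using fwd_dir[OF assms(2,3,4) _ ud] that by blast
  have B: "is_dual_core_inverse C (st \<phi>\<cdot>inverse_of C U\<cdot>\<phi>\<cdot>\<phi>) \<phi> \<and>
           Cmp C (Cmp C (st \<phi>) (inverse_of C U)) (Cmp C \<phi> \<phi>) = st \<phi>\<cdot>inverse_of C U\<cdot>\<phi>\<cdot>\<phi>"
    if k: "is_kernel C \<kappa> \<phi>" and i1: "invertible C (\<kappa>\<cdot>lam)" and i2: "invertible C U" for \<kappa>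
  proof -
    obtain s where s: "is_inverse C (\<kappa>\<cdot>lam) s" using i1 unfolding invertible_def by blast
    obtain ui where ui: "is_inverse C U ui" using i2 unfolding invertible_def by blast
    have iu: "inverse_of C U = ui" unfolding inverse_of_def
      using ui inv_unique by blast
    have uit: "ui \<in> Arr C" "Dom C ui = X" "Cod C ui = X"
      using ui ud ty unfolding is_inverse_def Hom_def by auto
    have kk: "\<kappa> \<in> Arr C" "Cod C \<kappa> = X" "\<kappa>\<cdot>\<phi> = Zero C (Dom C \<kappa>) X"
      using k ty unfolding is_kernel_def by auto
    show ?thesis using back_dir[OF assms(2,3,4) kk s ud ui] iu uit ty by simp
  qed
  have D: "dual_core C \<phi> = Cmp C (Cmp C (st \<phi>) (inverse_of C U)) (Cmp C \<phi> \<phi>)"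
    if h: "\<exists>\<chi>. is_dual_core_inverse C \<chi> \<phi>"
  proof -
    obtain \<kappa> where k: "is_kernel C \<kappa> \<phi>" "invertible C (\<kappa>\<cdot>lam)" "invertible C U" using F[OF h] by blast
    have d: "is_dual_core_inverse C (st \<phi>\<cdot>inverse_of C U\<cdot>\<phi>\<cdot>\<phi>) \<phi>"
      and e: "Cmp C (Cmp C (st \<phi>) (inverse_of C U)) (Cmp C \<phi> \<phi>) = st \<phi>\<cdot>inverse_of C U\<cdot>\<phi>\<cdot>\<phi>"
      using B[OF k] by auto
    have "dual_core C \<phi> = st \<phi>\<cdot>inverse_of C U\<cdot>\<phi>\<cdot>\<phi>"
      unfolding dual_core_def
      using d dci_unique[OF assms(2)] by blast
    thus ?thesis using e by simp
  qed
  have E: "(\<exists>\<chi>. is_dual_core_inverse C \<chi> \<phi>) \<longleftrightarrow>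
      (\<exists>\<kappa>. is_kernel C \<kappa> \<phi> \<and> invertible C (\<kappa>\<cdot>lam) \<and> invertible C U)"
    using F B by blast
  show ?thesis using E D unfolding U_def by blast
qed

end
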